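(* Let $\mathcal{M} = (S, A, T, D, R, \gamma)$ be a Markov decision process with finite state set $S$, finite action set $A$, transition probabilities $T_{s,a}(s')$, initial-state distribution $D$, discount factor $\gamma \in (0,1)$, and reward $R(s) = \langle w^*, \phi(s)\rangle$ for a feature map $\phi\colon S \to \mathbb{R}^k$ and a unit vector $w^* \in \mathbb{R}^k$. Let $A^L\colon \mathbb{R}^k \to \mathbb{R}^\ell$ be a linear map (the learner's worldview), and let $\pi^T, \pi^L$ be two policies. Suppose that $\Vert A^L(\mu(\pi^T) - \mu(\pi^L))\Vert < \varepsilon$. Then \[ \vert \langle w^*, \mu(\pi^T) - \mu(\pi^L)\rangle \vert < \frac{\varepsilon}{\sigma(A^L)} + \rho(A^L; w^* ) \cdot \operatorname{diam} \mu(\Pi), \] where $\sigma(A^L) = \min_{v \perp \ker A^L,\ \Vert v \Vert = 1} \Vert A^L v\Vert$.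
   Context: A policy $\pi$ is a family of probability distributions $\pi_s$ on $A$ indexed by $s \in S$; $\Pi$ denotes the set of all policies. For a policy $\pi$, $\mu(\pi) = \mathbb{E}\left(\sum_{t=0}^\infty \gamma^t \phi(s_t)\right) \in \mathbb{R}^k$ is its vector of discounted feature expectations, the expectation taken over trajectories $(s_0, s_1, \dots)$ with $s_0 \sim D$, actions drawn from $\pi$ and transitions from $T$. $\operatorname{diam}\mu(\Pi) = \sup_{\mu_0,\mu_1 \in \mu(\Pi)} \Vert \mu_0 - \mu_1\Vert$, with $\Vert\cdot\Vert$ the Euclidean norm. $\ker A^L = \{v \in \mathbb{R}^k : A^L v = 0\}$. The teaching risk is $\rho(A^L; w^* ) := \max_{v \in \ker A^L,\ \Vert v \Vert \le 1} \langle w^*, v\rangle$ (equivalently, the norm of the orthogonal projection of $w^*$ onto $\ker A^L$). *)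

theory Defs
  imports "HOL-Probability.Probability"
begin

text \<open>A (stationary, state-indexed) policy is a map pol :: 's => 'act pmf;
  the set of all policies is UNIV.\<close>

primrec state_dist ::
  "('s \<Rightarrow> 'act \<Rightarrow> 's pmf) \<Rightarrow> 's pmf \<Rightarrow> ('s \<Rightarrow> 'act pmf) \<Rightarrow> nat \<Rightarrow> 's pmf" where
  "state_dist T D pol 0 = D"
| "state_dist T D pol (Suc t) =
     bind_pmf (state_dist T D pol t) (\<lambda>s. bind_pmf (pol s) (\<lambda>a. T s a))"

definition feat_exp ::
  "('s \<Rightarrow> 'act \<Rightarrow> 's pmf) \<Rightarrow> 's pmf \<Rightarrow> real \<Rightarrow> ('s \<Rightarrow> real^'k)
     \<Rightarrow> ('s \<Rightarrow> 'act pmf) \<Rightarrow> real^'k" where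
  "feat_exp T D \<gamma> \<phi> pol =
     (\<Sum>t. \<gamma> ^ t *\<^sub>R measure_pmf.expectation (state_dist T D pol t) \<phi>)"

definition teaching_risk :: "(real^'k \<Rightarrow> 'b::real_normed_vector) \<Rightarrow> real^'k \<Rightarrow> real" where
  "teaching_risk A w = Sup {w \<bullet> v | v. A v = 0 \<and> norm v \<le> 1}"

definition sigma_min :: "(real^'k \<Rightarrow> 'b::real_normed_vector) \<Rightarrow> real" where
  "sigma_min A = Inf {norm (A v) | v. (\<forall>u. A u = 0 \<longrightarrow> v \<bullet> u = 0) \<and> norm v = 1}"

end

theory Submission
  imports Defs
begin

lemma feat_exp_bounded:
  fixes T :: "'s::finite \<Rightarrow> 'act::finite \<Rightarrow> 's pmf" and \<phi> :: "'s \<Rightarrow> real^'k"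
  assumes "0 < \<gamma>" "\<gamma> < 1"
  shows "bounded (range (feat_exp T D \<gamma> \<phi>))"
proof -
  define M where "M = (\<Sum>s\<in>UNIV. norm (\<phi> s))"
  have E: "norm (measure_pmf.expectation p \<phi>) \<le> M" for p :: "'s pmf"
  proof -
    have "measure_pmf.expectation p \<phi> = (\<Sum>s\<in>UNIV. pmf p s *\<^sub>R \<phi> s)"
      by (rule integral_measure_pmf) auto
    also have "norm \<dots> \<le> (\<Sum>s\<in>UNIV. norm (pmf p s *\<^sub>R \<phi> s))"
      by (rule norm_sum)
    also have "\<dots> \<le> M" unfolding M_def
      by (intro sum_mono) (simp add: pmf_le_1 mult_left_le_one_le)
    finally show ?thesis .
  qed
  have nt: "norm (\<gamma> ^ t *\<^sub>R measure_pmf.expectation (state_dist T D pol t) \<phi>) \<le> \<gamma> ^ t * M"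
    for pol t using E[of "state_dist T D pol t"] assms
    by (simp add: mult_left_mono)
  have sg: "summable (\<lambda>t. \<gamma> ^ t * M)"
    using assms by (intro summable_mult2 summable_geometric) simp
  have "norm (feat_exp T D \<gamma> \<phi> pol) \<le> (\<Sum>t. \<gamma> ^ t * M)" for pol
  proof -
    have sn: "summable (\<lambda>t. norm (\<gamma> ^ t *\<^sub>R measure_pmf.expectation (state_dist T D pol t) \<phi>))"
      by (rule summable_norm_comparison_test[OF _ sg]) (use nt in blast)
    have "norm (feat_exp T D \<gamma> \<phi> pol) \<le> (\<Sum>t. norm (\<gamma> ^ t *\<^sub>R measure_pmf.expectation (state_dist T D pol t) \<phi>))"
      unfolding feat_exp_def by (rule summable_norm[OF sn])
    also have "\<dots> \<le> (\<Sum>t. \<gamma> ^ t * M)" by (rule suminf_le[OF nt sn sg])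
    finally show ?thesis .
  qed
  then show ?thesis unfolding bounded_iff by blast
qed

theorem theorem1:
  fixes T :: "'s::finite \<Rightarrow> 'act::finite \<Rightarrow> 's pmf"
    and D :: "'s pmf"
    and \<gamma> :: real
    and \<phi> :: "'s \<Rightarrow> real^'k"
    and w :: "real^'k"
    and A :: "real^'k \<Rightarrow> real^'l"
    and piT piL :: "'s \<Rightarrow> 'act pmf"
    and \<epsilon> :: real
  assumes "0 < \<gamma>" and "\<gamma> < 1"
    and "norm w = 1"
    and "linear A"
    and "A \<noteq> (\<lambda>_. 0)"
    and "norm (A (feat_exp T D \<gamma> \<phi> piT - feat_exp T D \<gamma> \<phi> piL)) < \<epsilon>"
  shows "\<bar>w \<bullet> (feat_exp T D \<gamma> \<phi> piT - feat_exp T D \<gamma> \<phi> piL)\<bar>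
           < \<epsilon> / sigma_min A
             + teaching_risk A w * diameter (range (feat_exp T D \<gamma> \<phi>))"
proof -
  note lin = assms(4)
  define x where "x = feat_exp T D \<gamma> \<phi> piT - feat_exp T D \<gamma> \<phi> piL"
  define K where "K = {v. A v = 0}"
  define P where "P = {v. \<forall>u. A u = 0 \<longrightarrow> v \<bullet> u = 0}"
  have subK: "subspace K" unfolding K_def subspace_def
    using lin by (auto simp: linear_add linear_cmul linear_0)
  have spanK: "span K = K" using subK by (simp add: span_eq_iff)
  have decomp: "\<exists>y z. y \<in> K \<and> z \<in> P \<and> u = y + z" for u
  proof -
    obtain y z where "y \<in> span K" "\<And>w. w \<in> span K \<Longrightarrow> orthogonal z w" "u = y + z"
      using orthogonal_subspace_decomp_exists[of K u] by metis
    then show ?thesis unfolding spanK by (auto simp: P_def K_def orthogonal_def)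
  qed
  have subP: "subspace P" unfolding P_def subspace_def
    by (auto simp: inner_add_left)
  have AP: "\<forall>v\<in>P. A v = 0 \<longrightarrow> v = 0"
    unfolding P_def by auto
  obtain e where e: "e > 0" "\<forall>v\<in>P. norm (A v) \<ge> e * norm v"
    using injective_imp_isometric[OF closed_subspace[OF subP] subP _ AP] lin
      linear_conv_bounded_linear by blast
  define Sset where "Sset = {norm (A v) | v. (\<forall>u. A u = 0 \<longrightarrow> v \<bullet> u = 0) \<and> norm v = 1}"
  have sig: "sigma_min A = Inf Sset" unfolding sigma_min_def Sset_def ..
  obtain u0 where u0: "A u0 \<noteq> 0" using assms(5) by auto
  obtain y0 z0 where yz0: "y0 \<in> K" "z0 \<in> P" "u0 = y0 + z0" using decomp by blast
  have Az0: "A z0 = A u0" using yz0 lin unfolding K_def by (simp add: linear_add)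
  have z0: "z0 \<noteq> 0" using Az0 u0 lin by (auto simp: linear_0)
  have inP: "v \<in> P \<Longrightarrow> c *\<^sub>R v \<in> P" for v c using subP by (simp add: subspace_scale)
  have "norm (A (z0 /\<^sub>R norm z0)) \<in> Sset"
    unfolding Sset_def using inP[OF yz0(2), of "inverse (norm z0)"] z0
    by (auto simp: P_def)
  hence ne: "Sset \<noteq> {}" by auto
  have bdd: "bdd_below Sset" unfolding Sset_def by (auto intro!: bdd_belowI[of _ 0])
  have "e \<le> Inf Sset"
  proof (rule cInf_greatest[OF ne])
    fix s assume "s \<in> Sset"
    then obtain v where "v \<in> P" "norm v = 1" "s = norm (A v)" unfolding Sset_def P_def by blast
    then show "e \<le> s" using e(2) by force
  qed
  hence sigpos: "sigma_min A > 0" using sig e by simp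
  have sigz: "sigma_min A * norm z \<le> norm (A z)" if "z \<in> P" for z
  proof (cases "z = 0")
    case True then show ?thesis using lin by (simp add: linear_0)
  next
    case False
    have "norm (A (z /\<^sub>R norm z)) \<in> Sset"
      unfolding Sset_def using inP[OF that, of "inverse (norm z)"] False
      by (auto simp: P_def)
    hence "sigma_min A \<le> norm (A (z /\<^sub>R norm z))" using sig bdd by (simp add: cInf_lower)
    also have "\<dots> = norm (A z) / norm z" using lin False by (simp add: linear_cmul divide_inverse)
    finally show ?thesis using False by (simp add: field_simps)
  qed
  obtain y z where yz: "y \<in> K" "z \<in> P" "x = y + z" using decomp by blast
  have Ax: "A x = A z" using yz lin unfolding K_def by (simp add: linear_add)
  have ny: "norm y \<le> norm x"
  proof -
    have "y \<bullet> z = 0" using yz unfolding P_def K_def by (simp add: inner_commute)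
    hence "norm x ^ 2 = norm y ^ 2 + norm z ^ 2" using yz(3)
      using norm_add_Pythagorean[of y z] by (simp add: orthogonal_def)
    thus ?thesis by (smt (verit) power2_le_imp_le norm_ge_zero zero_le_power2)
  qed
  have t1: "\<bar>w \<bullet> z\<bar> < \<epsilon> / sigma_min A"
  proof -
    have "\<bar>w \<bullet> z\<bar> \<le> norm z" using Cauchy_Schwarz_ineq2[of w z] assms(3) by simp
    also have "\<dots> \<le> norm (A z) / sigma_min A" using sigz[OF yz(2)] sigpos
      by (simp add: field_simps)
    also have "\<dots> < \<epsilon> / sigma_min A" using assms(6) Ax sigpos
      unfolding x_def by (simp add: divide_strict_right_mono)
    finally show ?thesis .
  qed
  define R where "R = {w \<bullet> v | v. A v = 0 \<and> norm v \<le> 1}"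
  have tr: "teaching_risk A w = Sup R" unfolding teaching_risk_def R_def ..
  have bddR: "bdd_above R" unfolding R_def
    using Cauchy_Schwarz_ineq2[of w] assms(3)
    by (intro bdd_aboveI[of _ 1]) (auto, smt (verit) Cauchy_Schwarz_ineq2 mult_cancel_left1 abs_le_D1 mult_left_le_one_le norm_ge_zero)
  have "0 \<in> R" unfolding R_def using lin by (auto simp: linear_0 intro!: exI[of _ 0])
  hence rho0: "teaching_risk A w \<ge> 0" using tr bddR by (simp add: cSup_upper)
  have t2: "\<bar>w \<bullet> y\<bar> \<le> teaching_risk A w * norm y"
  proof (cases "y = 0")
    case True then show ?thesis using rho0 by simp
  next
    case False
    have Ay: "A y = 0" using yz(1) K_def by simp
    have a1: "A (y /\<^sub>R norm y) = 0" "A (- (y /\<^sub>R norm y)) = 0"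
      using Ay lin by (simp_all add: linear_cmul linear_neg)
    have a2: "norm (y /\<^sub>R norm y) \<le> 1" "norm (- (y /\<^sub>R norm y)) \<le> 1" using False by simp_all
    have a: "w \<bullet> (y /\<^sub>R norm y) \<in> R" "w \<bullet> (- (y /\<^sub>R norm y)) \<in> R"
      unfolding R_def using a1 a2 by blast+
    have "w \<bullet> (y /\<^sub>R norm y) \<le> teaching_risk A w" "w \<bullet> (- (y /\<^sub>R norm y)) \<le> teaching_risk A w"
      using a tr bddR by (simp_all add: cSup_upper del: inner_minus_right)
    hence "\<bar>w \<bullet> y\<bar> / norm y \<le> teaching_risk A w" using False
      by (auto simp: abs_if divide_simps inner_commute split: if_splits)
    thus ?thesis using False by (simp add: field_simps)
  qed
  have nx: "norm x \<le> diameter (range (feat_exp T D \<gamma> \<phi>))"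
  proof -
    have b: "bounded (range (feat_exp T D \<gamma> \<phi>))" by (rule feat_exp_bounded[OF assms(1,2)])
    show ?thesis using diameter_bounded_bound[OF b rangeI rangeI, of piT piL]
      unfolding x_def by (simp add: dist_norm)
  qed
  have "\<bar>w \<bullet> x\<bar> \<le> \<bar>w \<bullet> z\<bar> + \<bar>w \<bullet> y\<bar>" using yz(3) by (simp add: inner_add_right)
  also have "\<dots> < \<epsilon> / sigma_min A + teaching_risk A w * norm y" using t1 t2 by linarith
  also have "\<dots> \<le> \<epsilon> / sigma_min A + teaching_risk A w * diameter (range (feat_exp T D \<gamma> \<phi>))"
    using ny nx rho0 by (simp add: mult_left_mono)
  finally show ?thesis unfolding x_def .
qed

end
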